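(* Let $\mathcal G$ be a CFG. Suppose there exist: (1) an inductive invariant $\mathsf{Inv}$ containing the initial state; (2) a supermartingale function $V:\mathsf{Inv}\to\mathbb R$ on $\mathsf{Inv}$ with $V(\sigma_\bot)=0$ and $V(\sigma)>0$ for every non-terminal $\sigma\in\mathsf{Inv}$; (3) a function $U:\mathsf{Inv}\to\mathbb N$ with $U(\sigma_\bot)=0$ such that: (a) at every non-terminal assignment or nondeterministic state $\sigma\in\mathsf{Inv}$, $U(\sigma)>U(\sigma')$ for every successor $\sigma'$; (b) for every $r\in\mathbb R$, letting $V_{\le r}=\{\sigma\in\mathsf{Inv}: V(\sigma)\le r\}$: (i) $U$ is bounded on $V_{\le r}$, and (ii) there is $\epsilon_r>0$ such that for every non-terminal probabilistic state $(l,\mathbf x)\in V_{\le r}$, $\sum \mathsf{Pr}(l,l')[\mathbf x]>\epsilon_r$, where the sum ranges over the successors $(l',\mathbf x')$ with $U(l',\mathbf x')<U(l,\mathbf x)$. Then $\mathcal G$ is almost-surely terminating, i.e. $\Pr_{term}(\mathcal G)=1$.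
   Context: A probabilistic control flow graph (CFG) is a tuple $\mathcal G=(L,V,l_{init},\mathbf x_{init},\mapsto,G,\mathsf{Pr},\mathsf{Upd})$. $L$ is a finite set of locations, partitioned into assignment, nondeterministic and probabilistic locations. The variables in $V$ range over $\mathbb Q$. $(l_{init},\mathbf x_{init})$ is the initial state. There are finitely many guarded transitions. At probabilistic locations, each outgoing transition $(l,l')$ carries a probability expression $\mathsf{Pr}(l,l')$ whose values are positive and, over the enabled transitions, sum to $1$. Assignment locations have at most one outgoing transition, carrying an update of one variable by an arithmetic expression. A state is a pair $(l,\mathbf x)$, and successors are given by enabled transitions. Every state has at least one, and finitely many, successors. A scheduler resolves nondeterministic choices as a function of the finite path so far, and each scheduler $\mathfrak s$ induces a probability measure $\mathbb P_{\mathfrak s}$ on runs. The terminal state is $\sigma_\bot=(l_{out},\mathbf 0)$. $\Pr_{term}(\mathcal G)=\inf_{\mathfrak s}\mathbb P_{\mathfrak s}[\text{run visits }\sigma_\bot]$. An inductive invariant is a set of states closed under taking successors. A function $f:\mathsf{Inv}\to\mathbb R$ is a supermartingale function on $\mathsf{Inv}$ if, for every non-terminal $(l,\mathbf x)\in\mathsf{Inv}$: - if the state is an assignment or nondeterministic state, then $f(l,\mathbf x)\ge f(\sigma')$ for every successor $\sigma'$; - if it is a probabilistic state, then $f(l,\mathbf x)\ge\sum\mathsf{Pr}(l,l')[\mathbf x]\,f(l',\mathbf x')$, where the sum is over its successors. *)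

theory Defs
  imports Complex_Main
begin

datatype lkind = Assign | NonDet | Prob

text \<open>A CFG: locations (partitioned by kind), the variables are the elements of the
  type 'v (valuations 'v => rat), initial location/valuation, output location,
  transitions (pairs of locations), guards, probability expressions and updates
  (assignment transitions update one variable by an expression).\<close>
record ('l, 'v) cfg =
  locs   :: "'l set"
  kind   :: "'l \<Rightarrow> lkind"
  l_init :: 'l
  x_init :: "'v \<Rightarrow> rat"
  l_out  :: 'l
  trans  :: "('l \<times> 'l) set"
  guard  :: "'l \<times> 'l \<Rightarrow> ('v \<Rightarrow> rat) \<Rightarrow> bool"
  prb    :: "'l \<times> 'l \<Rightarrow> ('v \<Rightarrow> rat) \<Rightarrow> real"
  upd    :: "'l \<times> 'l \<Rightarrow> 'v \<times> (('v \<Rightarrow> rat) \<Rightarrow> rat)"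

type_synonym ('l, 'v) state = "'l \<times> ('v \<Rightarrow> rat)"

definition states :: "('l, 'v) cfg \<Rightarrow> ('l, 'v) state set" where
  "states G = {\<sigma>. fst \<sigma> \<in> locs G}"

definition term_state :: "('l, 'v) cfg \<Rightarrow> ('l, 'v) state" where
  "term_state G = (l_out G, (\<lambda>_. 0))"

definition enabled :: "('l, 'v) cfg \<Rightarrow> 'l \<Rightarrow> ('v \<Rightarrow> rat) \<Rightarrow> ('l \<times> 'l) set" where
  "enabled G l x = {t \<in> trans G. fst t = l \<and> guard G t x}"

definition post :: "('l, 'v) cfg \<Rightarrow> 'l \<times> 'l \<Rightarrow> ('v \<Rightarrow> rat) \<Rightarrow> ('l, 'v) state" where
  "post G t x = (snd t,
     (if kind G (fst t) = Assign then (case upd G t of (v, e) \<Rightarrow> x(v := e x)) else x))"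

definition succs :: "('l, 'v) cfg \<Rightarrow> ('l, 'v) state \<Rightarrow> ('l, 'v) state set" where
  "succs G \<sigma> = (\<lambda>t. post G t (snd \<sigma>)) ` enabled G (fst \<sigma>) (snd \<sigma>)"

definition wf_cfg :: "('l, 'v) cfg \<Rightarrow> bool" where
  "wf_cfg G \<longleftrightarrow>
     finite (locs G) \<and> trans G \<subseteq> locs G \<times> locs G \<and>
     l_init G \<in> locs G \<and> l_out G \<in> locs G \<and>
     (\<forall>l\<in>locs G. kind G l = Assign \<longrightarrow> card {t \<in> trans G. fst t = l} \<le> 1) \<and>
     (\<forall>l\<in>locs G. kind G l = Prob \<longrightarrow>
        (\<forall>t\<in>trans G. fst t = l \<longrightarrow> (\<forall>x. prb G t x > 0)) \<and>
        (\<forall>x. (\<Sum>t\<in>enabled G l x. prb G t x) = 1)) \<and>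
     (\<forall>l\<in>locs G. \<forall>x. enabled G l x \<noteq> {})"

text \<open>Schedulers: deterministic, history dependent (finite path, last element is the
  current state), choosing a successor at nondeterministic states.\<close>
type_synonym ('l, 'v) sched = "('l, 'v) state list \<Rightarrow> ('l, 'v) state"

definition valid_sched :: "('l, 'v) cfg \<Rightarrow> ('l, 'v) sched \<Rightarrow> bool" where
  "valid_sched G s \<longleftrightarrow>
     (\<forall>\<pi>. \<pi> \<noteq> [] \<and> last \<pi> \<in> states G \<and> kind G (fst (last \<pi>)) = NonDet \<longrightarrow>
          s \<pi> \<in> succs G (last \<pi>))"

text \<open>reach G s n \<pi>: probability (under the measure induced by s) that a run
  extending the finite path \<pi> visits the terminal state within n further steps
  (or already has, at the last state).\<close>
primrec reach :: "('l, 'v) cfg \<Rightarrow> ('l, 'v) sched \<Rightarrow> nat \<Rightarrow> ('l, 'v) state list \<Rightarrow> real" where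
  "reach G s 0 \<pi> = (if last \<pi> = term_state G then 1 else 0)"
| "reach G s (Suc n) \<pi> =
     (if last \<pi> = term_state G then 1 else
       (case last \<pi> of (l, x) \<Rightarrow>
         (case kind G l of
            NonDet \<Rightarrow> reach G s n (\<pi> @ [s \<pi>])
          | Assign \<Rightarrow> (\<Sum>t\<in>enabled G l x. reach G s n (\<pi> @ [post G t x]))
          | Prob \<Rightarrow> (\<Sum>t\<in>enabled G l x. prb G t x * reach G s n (\<pi> @ [post G t x])))))"

text \<open>P_s[run visits the terminal state] = limit (sup) of the finite-horizon probabilities.\<close>
definition term_prob_sched :: "('l, 'v) cfg \<Rightarrow> ('l, 'v) sched \<Rightarrow> real" where
  "term_prob_sched G s = (SUP n. reach G s n [(l_init G, x_init G)])"

definition Pr_term :: "('l, 'v) cfg \<Rightarrow> real" where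
  "Pr_term G = (INF s \<in> {s. valid_sched G s}. term_prob_sched G s)"

definition inductive_invariant :: "('l, 'v) cfg \<Rightarrow> ('l, 'v) state set \<Rightarrow> bool" where
  "inductive_invariant G I \<longleftrightarrow> I \<subseteq> states G \<and> (\<forall>\<sigma>\<in>I. succs G \<sigma> \<subseteq> I)"

definition supermartingale :: "('l, 'v) cfg \<Rightarrow> ('l, 'v) state set \<Rightarrow> (('l, 'v) state \<Rightarrow> real) \<Rightarrow> bool" where
  "supermartingale G I f \<longleftrightarrow>
     (\<forall>\<sigma>\<in>I. \<sigma> \<noteq> term_state G \<longrightarrow>
        (if kind G (fst \<sigma>) = Prob
         then f \<sigma> \<ge> (\<Sum>t\<in>enabled G (fst \<sigma>) (snd \<sigma>). prb G t (snd \<sigma>) * f (post G t (snd \<sigma>)))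
         else (\<forall>\<sigma>'\<in>succs G \<sigma>. f \<sigma> \<ge> f \<sigma>')))"

end

theory Submission
  imports Defs
begin

lemma enabled_locs: "wf_cfg G \<Longrightarrow> t \<in> enabled G l x \<Longrightarrow> l \<in> locs G"
  unfolding wf_cfg_def enabled_def by auto

lemma enabled_finite: "wf_cfg G \<Longrightarrow> finite (enabled G l x)"
proof -
  assume w: "wf_cfg G"
  have "enabled G l x \<subseteq> locs G \<times> locs G" using w unfolding wf_cfg_def enabled_def by auto
  moreover have "finite (locs G \<times> locs G)" using w unfolding wf_cfg_def by auto
  ultimately show ?thesis by (rule finite_subset)
qed

lemma enabled_ne: "wf_cfg G \<Longrightarrow> l \<in> locs G \<Longrightarrow> enabled G l x \<noteq> {}"
  unfolding wf_cfg_def by auto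

lemma prb_pos: "wf_cfg G \<Longrightarrow> kind G l = Prob \<Longrightarrow> t \<in> enabled G l x \<Longrightarrow> prb G t x > 0"
proof -
  assume w: "wf_cfg G" and k: "kind G l = Prob" and t: "t \<in> enabled G l x"
  have l: "l \<in> locs G" using enabled_locs[OF w t] .
  show ?thesis using w k t l unfolding wf_cfg_def enabled_def by auto
qed

lemma prb_sum: "wf_cfg G \<Longrightarrow> l \<in> locs G \<Longrightarrow> kind G l = Prob \<Longrightarrow>
   (\<Sum>t\<in>enabled G l x. prb G t x) = 1"
  unfolding wf_cfg_def by auto

lemma assign_single: "wf_cfg G \<Longrightarrow> l \<in> locs G \<Longrightarrow> kind G l = Assign \<Longrightarrow>
   \<exists>t. enabled G l x = {t}"
proof -
  assume w: "wf_cfg G" and l: "l \<in> locs G" and k: "kind G l = Assign"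
  have c: "card {t \<in> trans G. fst t = l} \<le> 1" using w l k unfolding wf_cfg_def by auto
  have fin: "finite {t \<in> trans G. fst t = l}"
  proof -
    have "{t \<in> trans G. fst t = l} \<subseteq> locs G \<times> locs G" using w unfolding wf_cfg_def by auto
    moreover have "finite (locs G \<times> locs G)" using w unfolding wf_cfg_def by auto
    ultimately show ?thesis by (rule finite_subset)
  qed
  have sub: "enabled G l x \<subseteq> {t \<in> trans G. fst t = l}" unfolding enabled_def by auto
  have "card (enabled G l x) \<le> 1" using card_mono[OF fin sub] c by simp
  moreover have "enabled G l x \<noteq> {}" using enabled_ne[OF w l] .
  moreover have "finite (enabled G l x)" using enabled_finite[OF w] .
  ultimately show ?thesis
    by (metis One_nat_def card.empty card_1_singletonE card_gt_0_iff le_antisym less_one not_le)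
qed

lemma reach_bounds: "wf_cfg G \<Longrightarrow> 0 \<le> reach G s n \<pi> \<and> reach G s n \<pi> \<le> 1"
proof (induction n arbitrary: \<pi>)
  case 0
  then show ?case by simp
next
  case (Suc n)
  note w = Suc.prems
  show ?case
  proof (cases "last \<pi> = term_state G")
    case True
    then show ?thesis by simp
  next
    case False
    obtain l x where lx: "last \<pi> = (l, x)" by (cases "last \<pi>") auto
    show ?thesis
    proof (cases "kind G l")
      case Assign
      show ?thesis
      proof (cases "l \<in> locs G")
        case True
        then obtain t where t: "enabled G l x = {t}" using assign_single[OF w True Assign] by blast
        show ?thesis using False lx Assign t Suc.IH[OF w] by simp
      next
        case nl: False
        have "enabled G l x = {}" using enabled_locs[OF w] nl by blast
        then show ?thesis using False lx Assign by simp
      qed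
    next
      case NonDet
      then show ?thesis using False lx Suc.IH[OF w] by simp
    next
      case Prob
      have r: "reach G s (Suc n) \<pi> = (\<Sum>t\<in>enabled G l x. prb G t x * reach G s n (\<pi> @ [post G t x]))"
        using False lx Prob by simp
      have p: "\<And>t. t \<in> enabled G l x \<Longrightarrow> prb G t x > 0" using prb_pos[OF w Prob] by blast
      have ge: "0 \<le> (\<Sum>t\<in>enabled G l x. prb G t x * reach G s n (\<pi> @ [post G t x]))"
        by (rule sum_nonneg) (use p Suc.IH[OF w] in \<open>auto intro: mult_nonneg_nonneg less_imp_le\<close>)
      have le1: "(\<Sum>t\<in>enabled G l x. prb G t x * reach G s n (\<pi> @ [post G t x]))
            \<le> (\<Sum>t\<in>enabled G l x. prb G t x)"
        by (rule sum_mono) (use p Suc.IH[OF w] in \<open>auto intro: mult_left_le less_imp_le\<close>)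
      have "(\<Sum>t\<in>enabled G l x. prb G t x) \<le> 1"
      proof (cases "l \<in> locs G")
        case True
        then show ?thesis using prb_sum[OF w True Prob] by simp
      next
        case nl: False
        have "enabled G l x = {}" using enabled_locs[OF w] nl by blast
        then show ?thesis by simp
      qed
      then show ?thesis using r ge le1 by linarith
    qed
  qed
qed


definition absb :: "('l, 'v) cfg \<Rightarrow> (('l, 'v) state \<Rightarrow> real) \<Rightarrow> real \<Rightarrow> ('l, 'v) state \<Rightarrow> bool" where
  "absb G V r \<sigma> \<longleftrightarrow> \<sigma> = term_state G \<or> V \<sigma> > r"

definition Phi :: "('l, 'v) cfg \<Rightarrow> (('l, 'v) state \<Rightarrow> real) \<Rightarrow> real \<Rightarrow> (('l, 'v) state \<Rightarrow> real) \<Rightarrow> ('l, 'v) state \<Rightarrow> real" where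
  "Phi G V r w \<sigma> = (if absb G V r \<sigma> then 1 else if kind G (fst \<sigma>) = Prob
     then (\<Sum>t\<in>enabled G (fst \<sigma>) (snd \<sigma>). prb G t (snd \<sigma>) * w (post G t (snd \<sigma>)))
     else Min (w ` succs G \<sigma>))"

definition f0 :: "('l, 'v) cfg \<Rightarrow> (('l, 'v) state \<Rightarrow> real) \<Rightarrow> real \<Rightarrow> ('l, 'v) state \<Rightarrow> real" where
  "f0 G V r \<sigma> = (if absb G V r \<sigma> then 1 else 0)"

definition fN where "fN G V r n = (Phi G V r ^^ n) (f0 G V r)"

locale ctx =
  fixes G :: "('l, 'v) cfg" and Inv :: "('l, 'v) state set" and V :: "('l, 'v) state \<Rightarrow> real"
  assumes wf: "wf_cfg G"
    and inv: "inductive_invariant G Inv"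
    and sm: "supermartingale G Inv V"
    and V_term: "V (term_state G) = 0"
    and V_pos: "\<forall>\<sigma>\<in>Inv. \<sigma> \<noteq> term_state G \<longrightarrow> V \<sigma> > 0"
begin

lemma Inv_locs: "\<sigma> \<in> Inv \<Longrightarrow> fst \<sigma> \<in> locs G"
  using inv unfolding inductive_invariant_def states_def by auto

lemma succs_Inv: "\<sigma> \<in> Inv \<Longrightarrow> \<sigma>' \<in> succs G \<sigma> \<Longrightarrow> \<sigma>' \<in> Inv"
  using inv unfolding inductive_invariant_def by auto

lemma succs_fin: "finite (succs G \<sigma>)"
  unfolding succs_def using enabled_finite[OF wf] by simp

lemma succs_ne: "\<sigma> \<in> Inv \<Longrightarrow> succs G \<sigma> \<noteq> {}"
  unfolding succs_def using enabled_ne[OF wf Inv_locs] by simp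

lemma post_succs: "t \<in> enabled G (fst \<sigma>) (snd \<sigma>) \<Longrightarrow> post G t (snd \<sigma>) \<in> succs G \<sigma>"
  unfolding succs_def by auto

lemma V_nonneg: "\<sigma> \<in> Inv \<Longrightarrow> V \<sigma> \<ge> 0"
  using V_pos V_term by (cases "\<sigma> = term_state G") (auto intro: less_imp_le)

lemma Phi_affine:
  assumes a: "a \<ge> 0" and ab: "a + b \<le> 1" and h: "\<forall>\<sigma>\<in>Inv. w \<sigma> \<ge> a * w' \<sigma> + b"
  shows "\<forall>\<sigma>\<in>Inv. Phi G V r w \<sigma> \<ge> a * Phi G V r w' \<sigma> + b"
proof
  fix \<sigma> assume s: "\<sigma> \<in> Inv"
  show "Phi G V r w \<sigma> \<ge> a * Phi G V r w' \<sigma> + b"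
  proof (cases "absb G V r \<sigma>")
    case True
    then show ?thesis using ab unfolding Phi_def by simp
  next
    case nab: False
    show ?thesis
    proof (cases "kind G (fst \<sigma>) = Prob")
      case True
      let ?E = "enabled G (fst \<sigma>) (snd \<sigma>)"
      have p: "\<And>t. t \<in> ?E \<Longrightarrow> prb G t (snd \<sigma>) > 0" using prb_pos[OF wf True] by blast
      have "(\<Sum>t\<in>?E. prb G t (snd \<sigma>) * w (post G t (snd \<sigma>)))
          \<ge> (\<Sum>t\<in>?E. prb G t (snd \<sigma>) * (a * w' (post G t (snd \<sigma>)) + b))"
      proof (rule sum_mono)
        fix t assume t: "t \<in> ?E"
        have "post G t (snd \<sigma>) \<in> Inv" using succs_Inv[OF s post_succs[OF t]] .
        then show "prb G t (snd \<sigma>) * (a * w' (post G t (snd \<sigma>)) + b) \<le> prb G t (snd \<sigma>) * w (post G t (snd \<sigma>))"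
          using h p[OF t] by (auto intro: mult_left_mono)
      qed
      also have "(\<Sum>t\<in>?E. prb G t (snd \<sigma>) * (a * w' (post G t (snd \<sigma>)) + b))
         = a * (\<Sum>t\<in>?E. prb G t (snd \<sigma>) * w' (post G t (snd \<sigma>))) + b * (\<Sum>t\<in>?E. prb G t (snd \<sigma>))"
        by (simp add: sum.distrib sum_distrib_left algebra_simps)
      also have "(\<Sum>t\<in>?E. prb G t (snd \<sigma>)) = 1" using prb_sum[OF wf Inv_locs[OF s] True] .
      finally show ?thesis using nab True unfolding Phi_def by simp
    next
      case False
      let ?S = "succs G \<sigma>"
      have fin: "finite (w ` ?S)" using succs_fin by simp
      have ne: "w ` ?S \<noteq> {}" using succs_ne[OF s] by simp
      obtain z where z: "z \<in> ?S" "w z = Min (w ` ?S)" using Min_in[OF fin ne] by auto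
      have "Min (w' ` ?S) \<le> w' z" using z(1) succs_fin by simp
      hence "a * Min (w' ` ?S) + b \<le> a * w' z + b" using a by (simp add: mult_left_mono)
      also have "\<dots> \<le> w z" using h succs_Inv[OF s z(1)] by auto
      finally show ?thesis using nab False z(2) unfolding Phi_def by simp
    qed
  qed
qed

lemma Phi_iter_affine:
  assumes a: "a \<ge> 0" and ab: "a + b \<le> 1" and h: "\<forall>\<sigma>\<in>Inv. w \<sigma> \<ge> a * w' \<sigma> + b"
  shows "\<forall>\<sigma>\<in>Inv. (Phi G V r ^^ n) w \<sigma> \<ge> a * (Phi G V r ^^ n) w' \<sigma> + b"
proof (induction n)
  case 0
  then show ?case using h by simp
next
  case (Suc n)
  then show ?case using Phi_affine[OF a ab] by simp
qed

lemma fN_absb: "absb G V r \<sigma> \<Longrightarrow> fN G V r n \<sigma> = 1"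
  unfolding fN_def by (cases n) (auto simp: Phi_def f0_def)

lemma fN_Suc: "fN G V r (Suc n) = Phi G V r (fN G V r n)"
  unfolding fN_def by simp

lemma fN_nonneg: "\<forall>\<sigma>\<in>Inv. fN G V r n \<sigma> \<ge> 0"
proof (induction n)
  case 0
  then show ?case unfolding fN_def f0_def by simp
next
  case (Suc n)
  show ?case
  proof
    fix \<sigma> assume s: "\<sigma> \<in> Inv"
    show "fN G V r (Suc n) \<sigma> \<ge> 0"
    proof (cases "absb G V r \<sigma>")
      case True then show ?thesis using fN_absb by simp
    next
      case nab: False
      show ?thesis
      proof (cases "kind G (fst \<sigma>) = Prob")
        case True
        have p: "\<And>t. t \<in> enabled G (fst \<sigma>) (snd \<sigma>) \<Longrightarrow> prb G t (snd \<sigma>) > 0" using prb_pos[OF wf True] by blast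
        have "0 \<le> (\<Sum>t\<in>enabled G (fst \<sigma>) (snd \<sigma>). prb G t (snd \<sigma>) * fN G V r n (post G t (snd \<sigma>)))"
        proof (rule sum_nonneg)
          fix t assume t: "t \<in> enabled G (fst \<sigma>) (snd \<sigma>)"
          have "post G t (snd \<sigma>) \<in> Inv" using succs_Inv[OF s post_succs[OF t]] .
          then show "0 \<le> prb G t (snd \<sigma>) * fN G V r n (post G t (snd \<sigma>))"
            using p[OF t] Suc.IH by (simp add: less_imp_le)
        qed
        then show ?thesis using nab True unfolding fN_Suc Phi_def by simp
      next
        case False
        have fin: "finite (fN G V r n ` succs G \<sigma>)" using succs_fin by simp
        have ne: "fN G V r n ` succs G \<sigma> \<noteq> {}" using succs_ne[OF s] by simp
        have "0 \<le> Min (fN G V r n ` succs G \<sigma>)"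
          using Min_in[OF fin ne] Suc.IH succs_Inv[OF s] by auto
        then show ?thesis using nab False unfolding fN_Suc Phi_def by simp
      qed
    qed
  qed
qed


lemma fN_decrease:
  fixes U :: "('l, 'v) state \<Rightarrow> nat"
  assumes U_dec: "\<forall>\<sigma>\<in>Inv. \<sigma> \<noteq> term_state G \<and> kind G (fst \<sigma>) \<noteq> Prob \<longrightarrow>
                  (\<forall>\<sigma>'\<in>succs G \<sigma>. U \<sigma> > U \<sigma>')"
    and e0: "0 < \<epsilon>" and e1: "\<epsilon> \<le> 1"
    and hp: "\<forall>l x. (l, x) \<in> Inv \<and> V (l, x) \<le> r \<and>
                  (l, x) \<noteq> term_state G \<and> kind G l = Prob \<longrightarrow>
                  (\<Sum>t\<in>{t \<in> enabled G l x. U (post G t x) < U (l, x)}. prb G t x) > \<epsilon>"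
  shows "\<forall>\<sigma>\<in>Inv. U \<sigma> \<le> m \<longrightarrow> fN G V r m \<sigma> \<ge> \<epsilon> ^ m"
proof (induction m)
  case 0
  show ?case
  proof (intro ballI impI)
    fix \<sigma> assume s: "\<sigma> \<in> Inv" and u: "U \<sigma> \<le> 0"
    show "fN G V r 0 \<sigma> \<ge> \<epsilon> ^ 0"
    proof (cases "absb G V r \<sigma>")
      case True then show ?thesis using fN_absb by simp
    next
      case nab: False
      obtain l x where lx: "\<sigma> = (l, x)" by (cases \<sigma>) auto
      have nt: "\<sigma> \<noteq> term_state G" and vr: "V \<sigma> \<le> r" using nab unfolding absb_def by auto
      show ?thesis
      proof (cases "kind G l = Prob")
        case True
        have em: "{t \<in> enabled G l x. U (post G t x) < U (l, x)} = {}" using u lx by auto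
        have "\<epsilon> < (\<Sum>t\<in>{t \<in> enabled G l x. U (post G t x) < U (l, x)}. prb G t x)"
          using hp s vr nt True lx by blast
        then show ?thesis using em e0 by simp
      next
        case False
        obtain z where "z \<in> succs G \<sigma>" using succs_ne[OF s] by auto
        then show ?thesis using U_dec s nt False lx u by fastforce
      qed
    qed
  qed
next
  case (Suc m)
  show ?case
  proof (intro ballI impI)
    fix \<sigma> assume s: "\<sigma> \<in> Inv" and u: "U \<sigma> \<le> Suc m"
    have em: "\<epsilon> ^ Suc m \<le> \<epsilon> ^ m" using e0 e1 by (simp add: power_decreasing)
    have em1: "\<epsilon> ^ Suc m \<le> 1" by (rule power_le_one) (use e0 e1 in auto)
    show "fN G V r (Suc m) \<sigma> \<ge> \<epsilon> ^ Suc m"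
    proof (cases "absb G V r \<sigma>")
      case True then show ?thesis using fN_absb em1 by simp
    next
      case nab: False
      obtain l x where lx: "\<sigma> = (l, x)" by (cases \<sigma>) auto
      have nt: "\<sigma> \<noteq> term_state G" and vr: "V \<sigma> \<le> r" using nab unfolding absb_def by auto
      show ?thesis
      proof (cases "kind G l = Prob")
        case True
        let ?E = "enabled G l x"
        let ?D = "{t \<in> enabled G l x. U (post G t x) < U (l, x)}"
        have p: "\<And>t. t \<in> ?E \<Longrightarrow> prb G t x > 0" using prb_pos[OF wf True] by blast
        have pI: "\<And>t. t \<in> ?E \<Longrightarrow> post G t x \<in> Inv" using succs_Inv[OF s post_succs] lx by auto
        have finE: "finite ?E" using enabled_finite[OF wf] .
        have "(\<Sum>t\<in>?E. prb G t x * fN G V r m (post G t x)) \<ge> (\<Sum>t\<in>?D. prb G t x * fN G V r m (post G t x))"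
        proof (rule sum_mono2[OF finE])
          show "?D \<subseteq> ?E" by auto
        next
          fix t assume "t \<in> ?E - ?D"
          then show "0 \<le> prb G t x * fN G V r m (post G t x)"
            using p pI fN_nonneg by (simp add: less_imp_le)
        qed
        moreover have "(\<Sum>t\<in>?D. prb G t x * fN G V r m (post G t x)) \<ge> (\<Sum>t\<in>?D. prb G t x * \<epsilon> ^ m)"
        proof (rule sum_mono)
          fix t assume t: "t \<in> ?D"
          have "U (post G t x) \<le> m" using t u lx by auto
          then have "fN G V r m (post G t x) \<ge> \<epsilon> ^ m" using Suc.IH pI t by auto
          then show "prb G t x * \<epsilon> ^ m \<le> prb G t x * fN G V r m (post G t x)"
            using p t by (simp add: mult_left_mono less_imp_le)
        qed
        moreover have "(\<Sum>t\<in>?D. prb G t x * \<epsilon> ^ m) = (\<Sum>t\<in>?D. prb G t x) * \<epsilon> ^ m"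
          by (simp add: sum_distrib_right)
        moreover have "(\<Sum>t\<in>?D. prb G t x) * \<epsilon> ^ m \<ge> \<epsilon> * \<epsilon> ^ m"
          using hp s vr nt True lx e0 by (auto intro!: mult_right_mono less_imp_le)
        ultimately have "(\<Sum>t\<in>?E. prb G t x * fN G V r m (post G t x)) \<ge> \<epsilon> ^ Suc m" by simp
        then show ?thesis using nab True lx unfolding fN_Suc Phi_def by simp
      next
        case False
        let ?S = "succs G \<sigma>"
        have fin: "finite (fN G V r m ` ?S)" using succs_fin by simp
        have ne: "fN G V r m ` ?S \<noteq> {}" using succs_ne[OF s] by simp
        obtain z where z: "z \<in> ?S" "fN G V r m z = Min (fN G V r m ` ?S)" using Min_in[OF fin ne] by auto
        have "U z \<le> m" using U_dec s nt False lx u z(1) by fastforce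
        then have "fN G V r m z \<ge> \<epsilon> ^ m" using Suc.IH succs_Inv[OF s z(1)] by auto
        then show ?thesis using nab False lx z(2) em unfolding fN_Suc Phi_def by simp
      qed
    qed
  qed
qed

lemma reach_lower:
  assumes r0: "r > 0" and vs: "valid_sched G s"
  shows "\<forall>\<pi>. \<pi> \<noteq> [] \<and> last \<pi> \<in> Inv \<longrightarrow> reach G s n \<pi> \<ge> fN G V r n (last \<pi>) - V (last \<pi>) / r"
proof (induction n)
  case 0
  show ?case
  proof (intro allI impI)
    fix \<pi> assume h: "\<pi> \<noteq> [] \<and> last \<pi> \<in> Inv"
    have vn: "V (last \<pi>) \<ge> 0" using V_nonneg h by auto
    show "reach G s 0 \<pi> \<ge> fN G V r 0 (last \<pi>) - V (last \<pi>) / r"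
    proof (cases "last \<pi> = term_state G")
      case True
      have "absb G V r (last \<pi>)" using True by (simp add: absb_def)
      then show ?thesis using V_term fN_absb[of r "last \<pi>"] True by simp
    next
      case False
      show ?thesis
      proof (cases "V (last \<pi>) > r")
        case True
        then have "V (last \<pi>) / r > 1" using r0 by simp
        then show ?thesis using False unfolding fN_def f0_def absb_def by simp
      next
        case c: False
        have "V (last \<pi>) / r \<ge> 0" using vn r0 by simp
        then show ?thesis using False c unfolding fN_def f0_def absb_def by simp
      qed
    qed
  qed
next
  case (Suc n)
  show ?case
  proof (intro allI impI)
    fix \<pi> assume h: "\<pi> \<noteq> [] \<and> last \<pi> \<in> Inv"
    define \<sigma> where "\<sigma> = last \<pi>"
    have s: "\<sigma> \<in> Inv" using h \<sigma>_def by simp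
    have vn: "V \<sigma> \<ge> 0" using V_nonneg s by auto
    obtain l x where lx: "\<sigma> = (l, x)" by (cases \<sigma>) auto
    have IH: "\<And>\<sigma>'. \<sigma>' \<in> Inv \<Longrightarrow> reach G s n (\<pi> @ [\<sigma>']) \<ge> fN G V r n \<sigma>' - V \<sigma>' / r"
      using Suc.IH by (metis last_snoc snoc_eq_iff_butlast)
    show "reach G s (Suc n) \<pi> \<ge> fN G V r (Suc n) (last \<pi>) - V (last \<pi>) / r"
    proof (cases "\<sigma> = term_state G")
      case True
      have "absb G V r (last \<pi>)" using True \<sigma>_def by (simp add: absb_def)
      then show ?thesis using V_term fN_absb[of r "last \<pi>"] True \<sigma>_def by simp
    next
      case nt: False
      have rnn: "reach G s (Suc n) \<pi> \<ge> 0" using reach_bounds[OF wf] by blast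
      show ?thesis
      proof (cases "V \<sigma> > r")
        case True
        then have "V \<sigma> / r > 1" using r0 by simp
        moreover have "absb G V r (last \<pi>)" using True \<sigma>_def by (simp add: absb_def)
        ultimately have "fN G V r (Suc n) (last \<pi>) - V (last \<pi>) / r \<le> 0"
          using fN_absb[of r "last \<pi>"] \<sigma>_def by simp
        then show ?thesis using rnn by linarith
      next
        case c: False
        have nab: "\<not> absb G V r \<sigma>" using nt c by (simp add: absb_def)
        have lloc: "l \<in> locs G" using Inv_locs[OF s] lx by simp
        have smd: "\<And>\<sigma>'. kind G l \<noteq> Prob \<Longrightarrow> \<sigma>' \<in> succs G \<sigma> \<Longrightarrow> V \<sigma>' \<le> V \<sigma>"
          using sm s nt lx unfolding supermartingale_def by auto
        have minstep: "\<And>\<sigma>'. kind G l \<noteq> Prob \<Longrightarrow> \<sigma>' \<in> succs G \<sigma> \<Longrightarrow>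
             reach G s n (\<pi> @ [\<sigma>']) \<ge> fN G V r (Suc n) \<sigma> - V \<sigma> / r"
        proof -
          fix \<sigma>' assume k: "kind G l \<noteq> Prob" and s': "\<sigma>' \<in> succs G \<sigma>"
          have "Min (fN G V r n ` succs G \<sigma>) \<le> fN G V r n \<sigma>'" using s' succs_fin by simp
          moreover have "V \<sigma>' / r \<le> V \<sigma> / r" using smd[OF k s'] r0 by (simp add: divide_right_mono)
          moreover have "fN G V r (Suc n) \<sigma> = Min (fN G V r n ` succs G \<sigma>)"
            using nab k lx unfolding fN_Suc Phi_def by simp
          ultimately show "reach G s n (\<pi> @ [\<sigma>']) \<ge> fN G V r (Suc n) \<sigma> - V \<sigma> / r"
            using IH[OF succs_Inv[OF s s']] by linarith
        qed
        show ?thesis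
        proof (cases "kind G l")
          case NonDet
          have st: "last \<pi> \<in> states G" using h inv unfolding inductive_invariant_def by auto
          have "s \<pi> \<in> succs G (last \<pi>)" using vs h st NonDet lx \<sigma>_def unfolding valid_sched_def
            by auto
          then have "s \<pi> \<in> succs G \<sigma>" using \<sigma>_def by simp
          moreover have "reach G s (Suc n) \<pi> = reach G s n (\<pi> @ [s \<pi>])"
            using nt NonDet lx \<sigma>_def by simp
          ultimately show ?thesis using minstep NonDet \<sigma>_def by simp
        next
          case Assign
          obtain t where t: "enabled G l x = {t}" using assign_single[OF wf lloc Assign] by blast
          have "post G t x \<in> succs G \<sigma>" using post_succs[of t \<sigma>] t lx by simp
          moreover have "reach G s (Suc n) \<pi> = reach G s n (\<pi> @ [post G t x])"
            using nt Assign lx t \<sigma>_def by simp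
          ultimately show ?thesis using minstep Assign \<sigma>_def by simp
        next
          case Prob
          let ?E = "enabled G l x"
          have p: "\<And>t. t \<in> ?E \<Longrightarrow> prb G t x > 0" using prb_pos[OF wf Prob] by blast
          have pI: "\<And>t. t \<in> ?E \<Longrightarrow> post G t x \<in> Inv" using succs_Inv[OF s post_succs] lx by auto
          have "reach G s (Suc n) \<pi> = (\<Sum>t\<in>?E. prb G t x * reach G s n (\<pi> @ [post G t x]))"
            using nt Prob lx \<sigma>_def by simp
          also have "\<dots> \<ge> (\<Sum>t\<in>?E. prb G t x * (fN G V r n (post G t x) - V (post G t x) / r))"
            by (rule sum_mono) (use p pI IH in \<open>auto intro: mult_left_mono less_imp_le\<close>)
          finally have A: "reach G s (Suc n) \<pi> \<ge> (\<Sum>t\<in>?E. prb G t x * fN G V r n (post G t x))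
                 - (\<Sum>t\<in>?E. prb G t x * V (post G t x)) / r"
            by (simp add: sum_subtractf right_diff_distrib sum_divide_distrib)
          have B: "(\<Sum>t\<in>?E. prb G t x * V (post G t x)) \<le> V \<sigma>"
            using sm s nt lx Prob unfolding supermartingale_def by auto
          have "(\<Sum>t\<in>?E. prb G t x * V (post G t x)) / r \<le> V \<sigma> / r"
            using B r0 by (simp add: divide_right_mono)
          moreover have "fN G V r (Suc n) \<sigma> = (\<Sum>t\<in>?E. prb G t x * fN G V r n (post G t x))"
            using nab Prob lx unfolding fN_Suc Phi_def by simp
          ultimately have "fN G V r (Suc n) \<sigma> - V \<sigma> / r \<le> reach G s (Suc n) \<pi>" using A by linarith
          then show ?thesis using \<sigma>_def by simp
        qed
      qed
    qed
  qed
qed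

end

theorem mainTheorem3:
  fixes G :: "('l, 'v::finite) cfg"
    and Inv :: "('l, 'v) state set"
    and V :: "('l, 'v) state \<Rightarrow> real"
    and U :: "('l, 'v) state \<Rightarrow> nat"
  assumes wf: "wf_cfg G"
    and inv: "inductive_invariant G Inv"
    and init: "(l_init G, x_init G) \<in> Inv"
    and sm: "supermartingale G Inv V"
    and V_term: "V (term_state G) = 0"
    and V_pos: "\<forall>\<sigma>\<in>Inv. \<sigma> \<noteq> term_state G \<longrightarrow> V \<sigma> > 0"
    and U_term: "U (term_state G) = 0"
    and U_dec: "\<forall>\<sigma>\<in>Inv. \<sigma> \<noteq> term_state G \<and> kind G (fst \<sigma>) \<noteq> Prob \<longrightarrow>
                  (\<forall>\<sigma>'\<in>succs G \<sigma>. U \<sigma> > U \<sigma>')"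
    and U_bdd: "\<forall>r::real. \<exists>B::nat. \<forall>\<sigma>\<in>Inv. V \<sigma> \<le> r \<longrightarrow> U \<sigma> \<le> B"
    and U_prob: "\<forall>r::real. \<exists>\<epsilon>>0. \<forall>l x. (l, x) \<in> Inv \<and> V (l, x) \<le> r \<and>
                  (l, x) \<noteq> term_state G \<and> kind G l = Prob \<longrightarrow>
                  (\<Sum>t\<in>{t \<in> enabled G l x. U (post G t x) < U (l, x)}. prb G t x) > \<epsilon>"
  shows "Pr_term G = 1"
proof -
  interpret ctx G Inv V using wf inv sm V_term V_pos by unfold_locales
  define \<sigma>0 where "\<sigma>0 = (l_init G, x_init G)"
  have key: "\<And>s \<delta>. valid_sched G s \<Longrightarrow> \<delta> > 0 \<Longrightarrow> \<exists>n. reach G s n [\<sigma>0] > 1 - \<delta>"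
  proof -
    fix s and \<delta> :: real assume vs: "valid_sched G s" and d0: "\<delta> > 0"
    define V0 where "V0 = V \<sigma>0"
    have V0n: "V0 \<ge> 0" using V_nonneg init V0_def \<sigma>0_def by simp
    define r where "r = 2 * (V0 + 1) / \<delta>"
    have r0: "r > 0" using V0n d0 r_def by simp
    have V0r: "V0 / r < \<delta> / 2"
    proof -
      have "V0 / r = V0 * \<delta> / (2 * (V0 + 1))" unfolding r_def using d0 V0n by (simp add: divide_simps)
      also have "\<dots> < \<delta> / 2" using d0 V0n by (simp add: field_simps)
      finally show ?thesis .
    qed
    obtain B where B: "\<forall>\<sigma>\<in>Inv. V \<sigma> \<le> r \<longrightarrow> U \<sigma> \<le> B" using U_bdd by blast
    obtain \<epsilon> where e0: "\<epsilon> > 0" and he: "\<forall>l x. (l, x) \<in> Inv \<and> V (l, x) \<le> r \<and>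
                  (l, x) \<noteq> term_state G \<and> kind G l = Prob \<longrightarrow>
                  (\<Sum>t\<in>{t \<in> enabled G l x. U (post G t x) < U (l, x)}. prb G t x) > \<epsilon>"
      using U_prob by blast
    define \<epsilon>' where "\<epsilon>' = min \<epsilon> 1"
    have e'0: "\<epsilon>' > 0" and e'1: "\<epsilon>' \<le> 1" using e0 \<epsilon>'_def by auto
    have he': "\<forall>l x. (l, x) \<in> Inv \<and> V (l, x) \<le> r \<and>
                  (l, x) \<noteq> term_state G \<and> kind G l = Prob \<longrightarrow>
                  (\<Sum>t\<in>{t \<in> enabled G l x. U (post G t x) < U (l, x)}. prb G t x) > \<epsilon>'"
      using he \<epsilon>'_def by force
    note dec = fN_decrease[OF U_dec e'0 e'1 he', of B]
    define c where "c = \<epsilon>' ^ B"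
    have c0: "c > 0" and c1: "c \<le> 1" using e'0 e'1 c_def by (auto intro: power_le_one)
    have fB: "\<forall>\<sigma>\<in>Inv. fN G V r B \<sigma> \<ge> (1 - c) * f0 G V r \<sigma> + c"
    proof
      fix \<sigma> assume s: "\<sigma> \<in> Inv"
      show "fN G V r B \<sigma> \<ge> (1 - c) * f0 G V r \<sigma> + c"
      proof (cases "absb G V r \<sigma>")
        case True then show ?thesis using fN_absb[of r \<sigma> B] by (simp add: f0_def)
      next
        case False
        then have "V \<sigma> \<le> r" by (simp add: absb_def)
        then have "U \<sigma> \<le> B" using B s by blast
        then have "fN G V r B \<sigma> \<ge> c" using dec s c_def by blast
        then show ?thesis using False by (simp add: f0_def)
      qed
    qed
    have blocks: "\<forall>\<sigma>\<in>Inv. 1 - fN G V r (k * B) \<sigma> \<le> (1 - c) ^ k" for k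
    proof (induction k)
      case 0
      show ?case by (simp add: fN_def f0_def)
    next
      case (Suc k)
      have it: "\<forall>\<sigma>\<in>Inv. (Phi G V r ^^ (k * B)) (fN G V r B) \<sigma> \<ge> (1 - c) * (Phi G V r ^^ (k * B)) (f0 G V r) \<sigma> + c"
        by (rule Phi_iter_affine) (use c1 c0 fB in auto)
      have eq: "fN G V r (Suc k * B) = (Phi G V r ^^ (k * B)) (fN G V r B)"
      proof -
        have "Suc k * B = k * B + B" by simp
        then show ?thesis unfolding fN_def by (simp only: funpow_add comp_apply)
      qed
      show ?case
      proof
        fix \<sigma> assume s: "\<sigma> \<in> Inv"
        have "fN G V r (Suc k * B) \<sigma> \<ge> (1 - c) * fN G V r (k * B) \<sigma> + c"
          using it s eq unfolding fN_def by simp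
        then have "1 - fN G V r (Suc k * B) \<sigma> \<le> (1 - c) * (1 - fN G V r (k * B) \<sigma>)"
          by (simp add: algebra_simps)
        also have "\<dots> \<le> (1 - c) * (1 - c) ^ k"
          using Suc.IH s c1 by (simp add: mult_left_mono)
        finally show "1 - fN G V r (Suc k * B) \<sigma> \<le> (1 - c) ^ Suc k" by simp
      qed
    qed
    obtain k where k: "(1 - c) ^ k < \<delta> / 2" using real_arch_pow_inv[of "\<delta> / 2" "1 - c"] d0 c0 by auto
    have "reach G s (k * B) [\<sigma>0] \<ge> fN G V r (k * B) \<sigma>0 - V \<sigma>0 / r"
      using reach_lower[OF r0 vs, of "k * B"] init \<sigma>0_def by auto
    moreover have "1 - fN G V r (k * B) \<sigma>0 \<le> (1 - c) ^ k" using blocks init \<sigma>0_def by auto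
    ultimately have "reach G s (k * B) [\<sigma>0] > 1 - \<delta>" using k V0r unfolding V0_def by linarith
    then show "\<exists>n. reach G s n [\<sigma>0] > 1 - \<delta>" by blast
  qed
  have tps: "term_prob_sched G s = 1" if vs: "valid_sched G s" for s
  proof -
    have bd: "\<And>n. reach G s n [\<sigma>0] \<le> 1" using reach_bounds[OF wf] by blast
    have bdd: "bdd_above (range (\<lambda>n. reach G s n [\<sigma>0]))" by (rule bdd_aboveI[where M=1]) (use bd in auto)
    have le: "(SUP n. reach G s n [\<sigma>0]) \<le> 1" by (rule cSUP_least) (use bd in auto)
    have ge: "1 \<le> (SUP n. reach G s n [\<sigma>0])"
    proof (rule field_le_epsilon)
      fix e :: real assume e: "0 < e"
      obtain n where "reach G s n [\<sigma>0] > 1 - e" using key[OF vs e] by blast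
      moreover have "reach G s n [\<sigma>0] \<le> (SUP n. reach G s n [\<sigma>0])" by (rule cSUP_upper[OF _ bdd]) simp
      ultimately show "1 \<le> (SUP n. reach G s n [\<sigma>0]) + e" by linarith
    qed
    show ?thesis unfolding term_prob_sched_def using le ge \<sigma>0_def by simp
  qed
  define s0 :: "('l, 'v) sched" where "s0 = (\<lambda>\<pi>. SOME \<sigma>'. \<sigma>' \<in> succs G (last \<pi>))"
  have "valid_sched G s0"
    unfolding valid_sched_def
  proof (intro allI impI)
    fix \<pi> :: "('l, 'v) state list" assume h: "\<pi> \<noteq> [] \<and> last \<pi> \<in> states G \<and> kind G (fst (last \<pi>)) = NonDet"
    have "fst (last \<pi>) \<in> locs G" using h unfolding states_def by auto
    then have "succs G (last \<pi>) \<noteq> {}" unfolding succs_def using enabled_ne[OF wf] by simp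
    then show "s0 \<pi> \<in> succs G (last \<pi>)" unfolding s0_def by (auto intro: someI_ex)
  qed
  then have ne: "{s. valid_sched G s} \<noteq> {}" by blast
  have "Pr_term G = (INF s\<in>{s. valid_sched G s}. (1::real))"
    unfolding Pr_term_def by (rule INF_cong) (auto simp: tps)
  also have "\<dots> = 1" using ne by simp
  finally show ?thesis .
qed

end
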